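(* Let $(N,v)$ be a cooperative game given by nonnegative integers $k,w_1,\ldots,w_{|N|}$ with $v(S)=\max_{S'\subseteq S:\ |S'|\le k}\sum_{j\in S'}w_j$ (the sum of the $k$ largest weights in $S$). Then the Shapley value of any given agent can be computed in time $O(|N|^3)$.
   Context: The Shapley value of agent $i$ in a cooperative game $(N,v)$ is $\phi_i(v)=\sum_{S\subseteq N\setminus\{i\}}\frac{|S|!\,(|N|-|S|-1)!}{|N|!}\big(v(S\cup\{i\})-v(S)\big)$. Running times count arithmetic operations at unit cost. *)

theory Defs
  imports Complex_Main
begin

text \<open>Agents are 0,...,n-1 where n = length w; weight of agent j is w ! j.\<close>

definition kmax_game :: "nat \<Rightarrow> nat list \<Rightarrow> nat set \<Rightarrow> rat" where
  "kmax_game k w S = of_nat (Max {(\<Sum>j\<in>S'. w ! j) | S'. S' \<subseteq> S \<and> card S' \<le> k})"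

definition shapley :: "nat set \<Rightarrow> (nat set \<Rightarrow> rat) \<Rightarrow> nat \<Rightarrow> rat" where
  "shapley N v i = (\<Sum>S\<in>Pow (N - {i}).
      of_nat (fact (card S) * fact (card N - card S - 1)) / of_nat (fact (card N))
      * (v (S \<union> {i}) - v S))"

text \<open>Registers are indexed by naturals and hold rationals. Each executed
 instruction (arithmetic operation, comparison, jump, (indirect) memory access)
 costs one time unit.\<close>

datatype instr =
    Const nat rat
  | Add nat nat nat
  | Sub nat nat nat
  | Mul nat nat nat
  | Div nat nat nat          (* r[a] := r[b] / r[c]  (x / 0 = 0) *)
  | Load nat nat
  | Store nat nat
  | JmpLe nat nat nat
  | Jmp nat
  | Halt

type_synonym config = "nat \<times> (nat \<Rightarrow> rat)"

definition halted :: "instr list \<Rightarrow> config \<Rightarrow> bool" where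
  "halted p c = (fst c \<ge> length p \<or> p ! fst c = Halt)"

definition addr :: "rat \<Rightarrow> nat" where
  "addr x = nat \<lfloor>x\<rfloor>"

definition step :: "instr list \<Rightarrow> config \<Rightarrow> config" where
  "step p c = (if halted p c then c else
     (let pc = fst c; m = snd c in
      case p ! pc of
        Const a x \<Rightarrow> (pc + 1, m(a := x))
      | Add a b d \<Rightarrow> (pc + 1, m(a := m b + m d))
      | Sub a b d \<Rightarrow> (pc + 1, m(a := m b - m d))
      | Mul a b d \<Rightarrow> (pc + 1, m(a := m b * m d))
      | Div a b d \<Rightarrow> (pc + 1, m(a := m b / m d))
      | Load a b \<Rightarrow> (pc + 1, m(a := m (addr (m b))))
      | Store a b \<Rightarrow> (pc + 1, m(addr (m a) := m b))
      | JmpLe a b l \<Rightarrow> (if m a \<le> m b then l else pc + 1, m)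
      | Jmp l \<Rightarrow> (l, m)
      | Halt \<Rightarrow> c))"

definition run :: "instr list \<Rightarrow> nat \<Rightarrow> config \<Rightarrow> config" where
  "run p t c = (step p ^^ t) c"

definition input_mem :: "nat \<Rightarrow> nat list \<Rightarrow> nat \<Rightarrow> nat \<Rightarrow> rat" where
  "input_mem k w i r =
     (if r = 0 then of_nat (length w)
      else if r = 1 then of_nat k
      else if r = 2 then of_nat i
      else if r - 3 < length w then of_nat (w ! (r - 3))
      else 0)"

definition computes_within ::
  "instr list \<Rightarrow> nat \<Rightarrow> nat list \<Rightarrow> nat \<Rightarrow> rat \<Rightarrow> nat \<Rightarrow> bool" where
  "computes_within p k w i y T =
     (\<exists>t \<le> T. halted p (run p t (0, input_mem k w i))
              \<and> snd (run p t (0, input_mem k w i)) 0 = y)"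

end

theory Submission
  imports Defs
begin

lemma run_Suc: "run p (Suc t) c = run p t (step p c)"
  by (simp add: run_def funpow_Suc_right del: funpow.simps)

lemma run_0: "run p 0 c = c" by (simp add: run_def)

lemma run_add: "run p (a + b) c = run p b (run p a c)"
  by (simp add: run_def funpow_add add.commute[of a b])

lemma run_seq: "run p t c = c' \<Longrightarrow> run p t2 c' = c'' \<Longrightarrow> run p (t + t2) c = c''"
  by (simp add: run_add)

definition reach :: "instr list \<Rightarrow> config \<Rightarrow> nat \<Rightarrow> config \<Rightarrow> bool" where
  "reach p c T c' = (\<exists>t\<le>T. run p t c = c')"

lemma reach_run: "run p t c = c' \<Longrightarrow> t \<le> T \<Longrightarrow> reach p c T c'"
  unfolding reach_def by blast

lemma reach_trans: "reach p c T1 c' \<Longrightarrow> reach p c' T2 c'' \<Longrightarrow> reach p c (T1 + T2) c''"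
  unfolding reach_def
  by (metis add_mono run_add)

lemma reach_mono: "reach p c T c' \<Longrightarrow> T \<le> T' \<Longrightarrow> reach p c T' c'"
  unfolding reach_def using order_trans by blast

lemma reach_refl: "reach p c T c"
  unfolding reach_def using run_0 by blast

definition prog :: "instr list" where
  "prog = [Add 0 0 0,
    Add 0 0 0,
    Store 0 1,
    Const 1 1,
    Add 0 0 1,
    Store 0 2,
    Sub 2 0 1,
    Const 1 4,
    Div 2 2 1,
    Const 1 1,
    Add 1 2 1,
    Div 2 2 1,
    Add 0 0 2,
    Const 1 30,
    Add 1 0 1,
    Load 2 0,
    Store 1 2,
    Const 1 1,
    Sub 0 0 1,
    Const 1 3,
    JmpLe 1 0 13,
    Const 1 2,
    Sub 0 0 1,
    Const 1 1,
    Sub 1 1 0,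
    Div 0 0 1,
    Const 14 1,
    Const 17 0,
    Add 3 0 17,
    Const 15 4,
    Mul 15 15 3,
    Const 16 30,
    Add 15 15 16,
    Load 4 15,
    Add 15 15 14,
    Load 16 15,
    Const 15 33,
    Add 15 15 16,
    Load 5 15,
    Const 13 0,
    Const 6 0,
    Const 15 33,
    Add 15 15 6,
    Load 8 15,
    JmpLe 8 5 46,
    Jmp 72,
    Const 10 0,
    Const 11 0,
    Const 12 0,
    Const 7 0,
    Const 15 33,
    Add 15 15 7,
    Load 9 15,
    JmpLe 8 9 57,
    JmpLe 9 12 61,
    Add 12 9 17,
    Jmp 61,
    Add 10 10 14,
    JmpLe 9 8 60,
    Jmp 61,
    Add 11 11 14,
    Add 7 7 14,
    JmpLe 3 7 64,
    Jmp 50,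
    Sub 15 8 12,
    Add 16 4 17,
    JmpLe 4 10 68,
    Add 16 10 17,
    Mul 15 15 16,
    Div 15 15 10,
    Div 15 15 11,
    Add 13 13 15,
    Add 6 6 14,
    JmpLe 3 6 75,
    Jmp 41,
    Add 0 13 17,
    Halt]"

lemma prog_len: "length prog = 77" by (simp add: prog_def)

lemma prog_step_0: "step prog (0, m) = (1, m(0 := m 0 + m 0))"
  by (simp add: step_def halted_def prog_def)

lemma prog_step_1: "step prog (1, m) = (2, m(0 := m 0 + m 0))"
  by (simp add: step_def halted_def prog_def)

lemma prog_step_2: "step prog (2, m) = (3, m(addr (m 0) := m 1))"
  by (simp add: step_def halted_def prog_def)

lemma prog_step_3: "step prog (3, m) = (4, m(1 := 1))"
  by (simp add: step_def halted_def prog_def)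

lemma prog_step_4: "step prog (4, m) = (5, m(0 := m 0 + m 1))"
  by (simp add: step_def halted_def prog_def)

lemma prog_step_5: "step prog (5, m) = (6, m(addr (m 0) := m 2))"
  by (simp add: step_def halted_def prog_def)

lemma prog_step_6: "step prog (6, m) = (7, m(2 := m 0 - m 1))"
  by (simp add: step_def halted_def prog_def)

lemma prog_step_7: "step prog (7, m) = (8, m(1 := 4))"
  by (simp add: step_def halted_def prog_def)

lemma prog_step_8: "step prog (8, m) = (9, m(2 := m 2 / m 1))"
  by (simp add: step_def halted_def prog_def)

lemma prog_step_9: "step prog (9, m) = (10, m(1 := 1))"
  by (simp add: step_def halted_def prog_def)

lemma prog_step_10: "step prog (10, m) = (11, m(1 := m 2 + m 1))"
  by (simp add: step_def halted_def prog_def)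

lemma prog_step_11: "step prog (11, m) = (12, m(2 := m 2 / m 1))"
  by (simp add: step_def halted_def prog_def)

lemma prog_step_12: "step prog (12, m) = (13, m(0 := m 0 + m 2))"
  by (simp add: step_def halted_def prog_def)

lemma prog_step_13: "step prog (13, m) = (14, m(1 := 30))"
  by (simp add: step_def halted_def prog_def)

lemma prog_step_14: "step prog (14, m) = (15, m(1 := m 0 + m 1))"
  by (simp add: step_def halted_def prog_def)

lemma prog_step_15: "step prog (15, m) = (16, m(2 := m (addr (m 0))))"
  by (simp add: step_def halted_def prog_def)

lemma prog_step_16: "step prog (16, m) = (17, m(addr (m 1) := m 2))"
  by (simp add: step_def halted_def prog_def)

lemma prog_step_17: "step prog (17, m) = (18, m(1 := 1))"
  by (simp add: step_def halted_def prog_def)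

lemma prog_step_18: "step prog (18, m) = (19, m(0 := m 0 - m 1))"
  by (simp add: step_def halted_def prog_def)

lemma prog_step_19: "step prog (19, m) = (20, m(1 := 3))"
  by (simp add: step_def halted_def prog_def)

lemma prog_step_20: "step prog (20, m) = (if m 1 \<le> m 0 then 13 else 21, m)"
  by (simp add: step_def halted_def prog_def)

lemma prog_step_21: "step prog (21, m) = (22, m(1 := 2))"
  by (simp add: step_def halted_def prog_def)

lemma prog_step_22: "step prog (22, m) = (23, m(0 := m 0 - m 1))"
  by (simp add: step_def halted_def prog_def)

lemma prog_step_23: "step prog (23, m) = (24, m(1 := 1))"
  by (simp add: step_def halted_def prog_def)

lemma prog_step_24: "step prog (24, m) = (25, m(1 := m 1 - m 0))"
  by (simp add: step_def halted_def prog_def)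

lemma prog_step_25: "step prog (25, m) = (26, m(0 := m 0 / m 1))"
  by (simp add: step_def halted_def prog_def)

lemma prog_step_26: "step prog (26, m) = (27, m(14 := 1))"
  by (simp add: step_def halted_def prog_def)

lemma prog_step_27: "step prog (27, m) = (28, m(17 := 0))"
  by (simp add: step_def halted_def prog_def)

lemma prog_step_28: "step prog (28, m) = (29, m(3 := m 0 + m 17))"
  by (simp add: step_def halted_def prog_def)

lemma prog_step_29: "step prog (29, m) = (30, m(15 := 4))"
  by (simp add: step_def halted_def prog_def)

lemma prog_step_30: "step prog (30, m) = (31, m(15 := m 15 * m 3))"
  by (simp add: step_def halted_def prog_def)

lemma prog_step_31: "step prog (31, m) = (32, m(16 := 30))"
  by (simp add: step_def halted_def prog_def)

lemma prog_step_32: "step prog (32, m) = (33, m(15 := m 15 + m 16))"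
  by (simp add: step_def halted_def prog_def)

lemma prog_step_33: "step prog (33, m) = (34, m(4 := m (addr (m 15))))"
  by (simp add: step_def halted_def prog_def)

lemma prog_step_34: "step prog (34, m) = (35, m(15 := m 15 + m 14))"
  by (simp add: step_def halted_def prog_def)

lemma prog_step_35: "step prog (35, m) = (36, m(16 := m (addr (m 15))))"
  by (simp add: step_def halted_def prog_def)

lemma prog_step_36: "step prog (36, m) = (37, m(15 := 33))"
  by (simp add: step_def halted_def prog_def)

lemma prog_step_37: "step prog (37, m) = (38, m(15 := m 15 + m 16))"
  by (simp add: step_def halted_def prog_def)

lemma prog_step_38: "step prog (38, m) = (39, m(5 := m (addr (m 15))))"
  by (simp add: step_def halted_def prog_def)

lemma prog_step_39: "step prog (39, m) = (40, m(13 := 0))"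
  by (simp add: step_def halted_def prog_def)

lemma prog_step_40: "step prog (40, m) = (41, m(6 := 0))"
  by (simp add: step_def halted_def prog_def)

lemma prog_step_41: "step prog (41, m) = (42, m(15 := 33))"
  by (simp add: step_def halted_def prog_def)

lemma prog_step_42: "step prog (42, m) = (43, m(15 := m 15 + m 6))"
  by (simp add: step_def halted_def prog_def)

lemma prog_step_43: "step prog (43, m) = (44, m(8 := m (addr (m 15))))"
  by (simp add: step_def halted_def prog_def)

lemma prog_step_44: "step prog (44, m) = (if m 8 \<le> m 5 then 46 else 45, m)"
  by (simp add: step_def halted_def prog_def)

lemma prog_step_45: "step prog (45, m) = (72, m)"
  by (simp add: step_def halted_def prog_def)

lemma prog_step_46: "step prog (46, m) = (47, m(10 := 0))"
  by (simp add: step_def halted_def prog_def)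

lemma prog_step_47: "step prog (47, m) = (48, m(11 := 0))"
  by (simp add: step_def halted_def prog_def)

lemma prog_step_48: "step prog (48, m) = (49, m(12 := 0))"
  by (simp add: step_def halted_def prog_def)

lemma prog_step_49: "step prog (49, m) = (50, m(7 := 0))"
  by (simp add: step_def halted_def prog_def)

lemma prog_step_50: "step prog (50, m) = (51, m(15 := 33))"
  by (simp add: step_def halted_def prog_def)

lemma prog_step_51: "step prog (51, m) = (52, m(15 := m 15 + m 7))"
  by (simp add: step_def halted_def prog_def)

lemma prog_step_52: "step prog (52, m) = (53, m(9 := m (addr (m 15))))"
  by (simp add: step_def halted_def prog_def)

lemma prog_step_53: "step prog (53, m) = (if m 8 \<le> m 9 then 57 else 54, m)"
  by (simp add: step_def halted_def prog_def)

lemma prog_step_54: "step prog (54, m) = (if m 9 \<le> m 12 then 61 else 55, m)"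
  by (simp add: step_def halted_def prog_def)

lemma prog_step_55: "step prog (55, m) = (56, m(12 := m 9 + m 17))"
  by (simp add: step_def halted_def prog_def)

lemma prog_step_56: "step prog (56, m) = (61, m)"
  by (simp add: step_def halted_def prog_def)

lemma prog_step_57: "step prog (57, m) = (58, m(10 := m 10 + m 14))"
  by (simp add: step_def halted_def prog_def)

lemma prog_step_58: "step prog (58, m) = (if m 9 \<le> m 8 then 60 else 59, m)"
  by (simp add: step_def halted_def prog_def)

lemma prog_step_59: "step prog (59, m) = (61, m)"
  by (simp add: step_def halted_def prog_def)

lemma prog_step_60: "step prog (60, m) = (61, m(11 := m 11 + m 14))"
  by (simp add: step_def halted_def prog_def)

lemma prog_step_61: "step prog (61, m) = (62, m(7 := m 7 + m 14))"
  by (simp add: step_def halted_def prog_def)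

lemma prog_step_62: "step prog (62, m) = (if m 3 \<le> m 7 then 64 else 63, m)"
  by (simp add: step_def halted_def prog_def)

lemma prog_step_63: "step prog (63, m) = (50, m)"
  by (simp add: step_def halted_def prog_def)

lemma prog_step_64: "step prog (64, m) = (65, m(15 := m 8 - m 12))"
  by (simp add: step_def halted_def prog_def)

lemma prog_step_65: "step prog (65, m) = (66, m(16 := m 4 + m 17))"
  by (simp add: step_def halted_def prog_def)

lemma prog_step_66: "step prog (66, m) = (if m 4 \<le> m 10 then 68 else 67, m)"
  by (simp add: step_def halted_def prog_def)

lemma prog_step_67: "step prog (67, m) = (68, m(16 := m 10 + m 17))"
  by (simp add: step_def halted_def prog_def)

lemma prog_step_68: "step prog (68, m) = (69, m(15 := m 15 * m 16))"
  by (simp add: step_def halted_def prog_def)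

lemma prog_step_69: "step prog (69, m) = (70, m(15 := m 15 / m 10))"
  by (simp add: step_def halted_def prog_def)

lemma prog_step_70: "step prog (70, m) = (71, m(15 := m 15 / m 11))"
  by (simp add: step_def halted_def prog_def)

lemma prog_step_71: "step prog (71, m) = (72, m(13 := m 13 + m 15))"
  by (simp add: step_def halted_def prog_def)

lemma prog_step_72: "step prog (72, m) = (73, m(6 := m 6 + m 14))"
  by (simp add: step_def halted_def prog_def)

lemma prog_step_73: "step prog (73, m) = (if m 3 \<le> m 6 then 75 else 74, m)"
  by (simp add: step_def halted_def prog_def)

lemma prog_step_74: "step prog (74, m) = (41, m)"
  by (simp add: step_def halted_def prog_def)

lemma prog_step_75: "step prog (75, m) = (76, m(0 := m 13 + m 17))"
  by (simp add: step_def halted_def prog_def)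

lemmas prog_steps = prog_step_0 prog_step_1 prog_step_2 prog_step_3 prog_step_4 prog_step_5 prog_step_6 prog_step_7 prog_step_8 prog_step_9 prog_step_10 prog_step_11 prog_step_12 prog_step_13 prog_step_14 prog_step_15 prog_step_16 prog_step_17 prog_step_18 prog_step_19 prog_step_20 prog_step_21 prog_step_22 prog_step_23 prog_step_24 prog_step_25 prog_step_26 prog_step_27 prog_step_28 prog_step_29 prog_step_30 prog_step_31 prog_step_32 prog_step_33 prog_step_34 prog_step_35 prog_step_36 prog_step_37 prog_step_38 prog_step_39 prog_step_40 prog_step_41 prog_step_42 prog_step_43 prog_step_44 prog_step_45 prog_step_46 prog_step_47 prog_step_48 prog_step_49 prog_step_50 prog_step_51 prog_step_52 prog_step_53 prog_step_54 prog_step_55 prog_step_56 prog_step_57 prog_step_58 prog_step_59 prog_step_60 prog_step_61 prog_step_62 prog_step_63 prog_step_64 prog_step_65 prog_step_66 prog_step_67 prog_step_68 prog_step_69 prog_step_70 prog_step_71 prog_step_72 prog_step_73 prog_step_74 prog_step_75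

lemma prog_halted: "halted prog (76, m)" by (simp add: halted_def prog_def)

lemma run_numeral: "run p (numeral k) c = run p (pred_numeral k) (step p c)"
  by (simp add: numeral_eq_Suc run_Suc)
lemma run_1: "run p 1 c = step p c"
  by (simp add: run_def)

lemma addr_nat: "addr (of_nat x) = x" by (simp add: addr_def)
lemma addr_num_plus: "addr (numeral a + of_nat l) = numeral a + l"
  unfolding addr_def by (metis nat_int of_nat_add of_nat_numeral floor_of_nat)

lemmas ex = run_Suc run_0 run_numeral run_1 prog_steps addr_nat addr_num_plus

fun cg :: "nat list \<Rightarrow> nat \<Rightarrow> nat \<Rightarrow> nat" where
  "cg w v 0 = 0" | "cg w v (Suc l) = cg w v l + (if v \<le> w!l then 1 else 0)"
fun ce :: "nat list \<Rightarrow> nat \<Rightarrow> nat \<Rightarrow> nat" where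
  "ce w v 0 = 0" | "ce w v (Suc l) = ce w v l + (if w!l = v then 1 else 0)"
fun pm :: "nat list \<Rightarrow> nat \<Rightarrow> nat \<Rightarrow> nat" where
  "pm w v 0 = 0" | "pm w v (Suc l) = (if w!l < v \<and> pm w v l < w!l then w!l else pm w v l)"

definition binv :: "nat list \<Rightarrow> (nat \<Rightarrow> rat) \<Rightarrow> bool" where
  "binv w m = (m 3 = of_nat (length w) \<and> m 14 = 1 \<and> m 17 = 0 \<and>
     (\<forall>j<length w. m (33 + j) = of_nat (w ! j)))"

lemma binv_upd: "binv w m \<Longrightarrow> a < 33 \<Longrightarrow> a \<notin> {3,14,17} \<Longrightarrow> binv w (m(a := x))"
  unfolding binv_def by auto

lemma inner_iter:
  assumes b: "binv w m" and l: "l < length w" and m7: "m 7 = of_nat l" and m8: "m 8 = of_nat v"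
    and m10: "m 10 = of_nat (cg w v l)" and m11: "m 11 = of_nat (ce w v l)"
    and m12: "m 12 = of_nat (pm w v l)"
  shows "\<exists>t m1. t \<le> 8 \<and> run prog t (50, m) = (62, m1) \<and> m1 7 = of_nat (Suc l) \<and>
     m1 10 = of_nat (cg w v (Suc l)) \<and> m1 11 = of_nat (ce w v (Suc l)) \<and>
     m1 12 = of_nat (pm w v (Suc l)) \<and> (\<forall>r. r \<notin> {7,9,10,11,12,15} \<longrightarrow> m1 r = m r)"
proof -
  have wl: "m (33 + l) = of_nat (w ! l)" using b l unfolding binv_def by auto
  have m14: "m 14 = 1" and m17: "m 17 = 0" using b unfolding binv_def by auto
  show ?thesis
  proof (cases "v \<le> w ! l")
    case True
    show ?thesis
    proof (cases "w ! l \<le> v")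
      case True2: True
      show ?thesis
        apply (rule exI[of _ 8])
        using True True2 by (simp add: ex m7 m8 m10 m11 m12 wl m14 m17)
    next
      case False
      show ?thesis
        apply (rule exI[of _ 8])
        using True False by (simp add: ex m7 m8 m10 m11 m12 wl m14 m17)
    qed
  next
    case False
    show ?thesis
    proof (cases "w ! l \<le> pm w v l")
      case True
      show ?thesis
        apply (rule exI[of _ 6])
        using True False by (simp add: ex m7 m8 m10 m11 m12 wl m14 m17)
    next
      case False2: False
      show ?thesis
        apply (rule exI[of _ 8])
        using False False2 by (simp add: ex m7 m8 m10 m11 m12 wl m14 m17)
    qed
  qed
qed

lemma inner_loop:
  "\<forall>l m. length w - l = d \<longrightarrow> binv w m \<longrightarrow> l < length w \<longrightarrow> m 7 = of_nat l \<longrightarrow> m 8 = of_nat v \<longrightarrow>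
     m 10 = of_nat (cg w v l) \<longrightarrow> m 11 = of_nat (ce w v l) \<longrightarrow> m 12 = of_nat (pm w v l) \<longrightarrow>
   (\<exists>m'. reach prog (50, m) (10 * d) (64, m') \<and>
     m' 10 = of_nat (cg w v (length w)) \<and> m' 11 = of_nat (ce w v (length w)) \<and>
     m' 12 = of_nat (pm w v (length w)) \<and> (\<forall>r. r \<notin> {7,9,10,11,12,15} \<longrightarrow> m' r = m r))"
proof (induction d)
  case 0
  then show ?case by auto
next
  case (Suc d)
  show ?case
  proof (intro allI impI)
    fix l m
    assume d: "length w - l = Suc d" and b: "binv w m" and l: "l < length w"
      and h: "m 7 = of_nat l" "m 8 = of_nat v" "m 10 = of_nat (cg w v l)"
        "m 11 = of_nat (ce w v l)" "m 12 = of_nat (pm w v l)"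
    obtain t m1 where t: "t \<le> 8" and r: "run prog t (50, m) = (62, m1)"
      and h1: "m1 7 = of_nat (Suc l)" "m1 10 = of_nat (cg w v (Suc l))"
        "m1 11 = of_nat (ce w v (Suc l))" "m1 12 = of_nat (pm w v (Suc l))"
      and pr: "\<forall>r. r \<notin> {7,9,10,11,12,15} \<longrightarrow> m1 r = m r"
      using inner_iter[OF b l h] by blast
    have b1: "binv w m1" using b pr unfolding binv_def by auto
    have m13: "m1 3 = of_nat (length w)" using b1 unfolding binv_def by auto
    show "\<exists>m'. reach prog (50, m) (10 * Suc d) (64, m') \<and>
     m' 10 = of_nat (cg w v (length w)) \<and> m' 11 = of_nat (ce w v (length w)) \<and>
     m' 12 = of_nat (pm w v (length w)) \<and> (\<forall>r. r \<notin> {7,9,10,11,12,15} \<longrightarrow> m' r = m r)"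
    proof (cases "Suc l < length w")
      case True
      have r2: "run prog 2 (62, m1) = (50, m1)" using True m13 h1 by (simp add: ex)
      have re: "reach prog (50, m) 10 (50, m1)"
        by (rule reach_run[OF run_seq[OF r r2]]) (use t in simp)
      have dd: "length w - Suc l = d" using d by simp
      have m18: "m1 8 = of_nat v" using pr h by simp
      obtain m' where re2: "reach prog (50, m1) (10 * d) (64, m')"
        and h2: "m' 10 = of_nat (cg w v (length w))" "m' 11 = of_nat (ce w v (length w))"
          "m' 12 = of_nat (pm w v (length w))" and pr2: "\<forall>r. r \<notin> {7,9,10,11,12,15} \<longrightarrow> m' r = m1 r"
        using Suc.IH[rule_format, OF dd b1 True h1(1) m18 h1(2-4)] by blast
      show ?thesis
        apply (rule exI[of _ m'])
        using reach_trans[OF re re2] h2 pr pr2 by simp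
    next
      case False
      then have n: "length w = Suc l" using l by simp
      have r2: "run prog 1 (62, m1) = (64, m1)" using n m13 h1 by (simp add: ex)
      have re: "reach prog (50, m) (10 * Suc d) (64, m1)"
        by (rule reach_run[OF run_seq[OF r r2]]) (use t in simp)
      show ?thesis
        apply (rule exI[of _ m1])
        using re h1 pr n by simp
    qed
  qed
qed

definition tm :: "nat list \<Rightarrow> nat \<Rightarrow> nat \<Rightarrow> nat \<Rightarrow> rat" where
  "tm w k wi v = (if v \<le> wi then (of_nat v - of_nat (pm w v (length w))) *
      of_nat (min k (cg w v (length w))) / of_nat (cg w v (length w)) / of_nat (ce w v (length w))
     else 0)"

definition binv2 :: "nat list \<Rightarrow> nat \<Rightarrow> nat \<Rightarrow> (nat \<Rightarrow> rat) \<Rightarrow> bool" where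
  "binv2 w k wi m = (binv w m \<and> m 4 = of_nat k \<and> m 5 = of_nat wi)"

lemma outer_iter:
  assumes b: "binv2 w k wi m" and j: "j < length w" and m6: "m 6 = of_nat j"
  shows "\<exists>m1. reach prog (41, m) (10 * length w + 20) (72, m1) \<and>
     m1 13 = m 13 + tm w k wi (w ! j) \<and> (\<forall>r. r \<notin> {7,8,9,10,11,12,13,15,16} \<longrightarrow> m1 r = m r)"
proof -
  have bb: "binv w m" and m4: "m 4 = of_nat k" and m5: "m 5 = of_nat wi" using b unfolding binv2_def by auto
  have wj: "m (33 + j) = of_nat (w ! j)" using bb j unfolding binv_def by auto
  have m14: "m 14 = 1" and m17: "m 17 = 0" and m3: "m 3 = of_nat (length w)" using bb unfolding binv_def by auto
  show ?thesis
  proof (cases "w ! j \<le> wi")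
    case False
    have r: "run prog 5 (41, m) = (72, m(15 := 33 + m 6, 8 := of_nat (w ! j)))"
      using False by (simp add: ex m6 wj m5)
    show ?thesis
      apply (rule exI[of _ "m(15 := 33 + m 6, 8 := of_nat (w ! j))"])
      using reach_run[OF r] False by (simp add: tm_def)
  next
    case True
    define v where "v = w ! j"
    have r: "run prog 8 (41, m) = (50, m(15 := 33 + m 6, 8 := of_nat v, 10 := 0, 11 := 0, 12 := 0, 7 := 0))"
      using True by (simp add: ex m6 wj m5 v_def)
    define ma where "ma = m(15 := 33 + m 6, 8 := of_nat v, 10 := 0, 11 := 0, 12 := 0, 7 := 0)"
    have ba: "binv w ma" using bb unfolding binv_def ma_def by auto
    have jj: "0 < length w" using j by linarith
    have pre: "ma 7 = of_nat 0" "ma 8 = of_nat v" "ma 10 = of_nat (cg w v 0)"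
      "ma 11 = of_nat (ce w v 0)" "ma 12 = of_nat (pm w v 0)" by (simp_all add: ma_def)
    obtain m' where re: "reach prog (50, ma) (10 * (length w - 0)) (64, m')"
      and h: "m' 10 = of_nat (cg w v (length w))" "m' 11 = of_nat (ce w v (length w))"
          "m' 12 = of_nat (pm w v (length w))" and pr: "\<forall>r. r \<notin> {7,9,10,11,12,15} \<longrightarrow> m' r = ma r"
      using inner_loop[where w=w and d="length w - 0" and v=v, rule_format, OF refl ba jj pre] by blast
    have m'4: "m' 4 = of_nat k" and m'8: "m' 8 = of_nat v" and m'13: "m' 13 = m 13"
      and m'17: "m' 17 = 0"
      using pr m4 m17 by (simp_all add: ma_def)
    have r2: "\<exists>t m2. t \<le> 8 \<and> run prog t (64, m') = (72, m2) \<and> m2 13 = m 13 + tm w k wi v \<and>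
        (\<forall>r. r \<notin> {13,15,16} \<longrightarrow> m2 r = m' r)"
    proof (cases "k \<le> cg w v (length w)")
      case True
      then show ?thesis using \<open>w ! j \<le> wi\<close>
        apply (intro exI[of _ 7])
        by (simp add: ex h m'4 m'8 m'13 m'17 tm_def v_def min_def)
    next
      case False
      then show ?thesis using \<open>w ! j \<le> wi\<close>
        apply (intro exI[of _ 8])
        by (simp add: ex h m'4 m'8 m'13 m'17 tm_def v_def min_def)
    qed
    then obtain t m2 where t8: "t \<le> 8" and r2': "run prog t (64, m') = (72, m2)" and m213: "m2 13 = m 13 + tm w k wi v"
      and pr2: "\<forall>r. r \<notin> {13,15,16} \<longrightarrow> m2 r = m' r" by blast
    have re1: "reach prog (41, m) 8 (50, ma)" using reach_run[OF r] ma_def by simp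
    have "reach prog (41, m) (8 + 10 * (length w - 0) + 8) (72, m2)"
      using reach_trans[OF reach_trans[OF re1 re] reach_run[OF r2' t8]] by simp
    then show ?thesis
      apply -
      apply (rule exI[of _ m2])
      apply (rule conjI)
       apply (erule reach_mono, simp)
      using pr pr2 m213 by (simp add: ma_def v_def)
  qed
qed

lemma outer_loop:
  "\<forall>j m. length w - j = d \<longrightarrow> binv2 w k wi m \<longrightarrow> j < length w \<longrightarrow> m 6 = of_nat j \<longrightarrow>
     m 13 = (\<Sum>j'<j. tm w k wi (w ! j')) \<longrightarrow>
   (\<exists>m'. reach prog (41, m) ((10 * length w + 23) * d) (75, m') \<and> binv2 w k wi m' \<and>
     m' 13 = (\<Sum>j'<length w. tm w k wi (w ! j')))"
proof (induction d)
  case 0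
  then show ?case by auto
next
  case (Suc d)
  show ?case
  proof (intro allI impI)
    fix j m
    assume d: "length w - j = Suc d" and b: "binv2 w k wi m" and j: "j < length w"
      and h6: "m 6 = of_nat j" and h13: "m 13 = (\<Sum>j'<j. tm w k wi (w ! j'))"
    obtain m1 where re: "reach prog (41, m) (10 * length w + 20) (72, m1)"
      and h1: "m1 13 = m 13 + tm w k wi (w ! j)"
      and pr: "\<forall>r. r \<notin> {7,8,9,10,11,12,13,15,16} \<longrightarrow> m1 r = m r"
      using outer_iter[OF b j h6] by blast
    have b1: "binv2 w k wi m1" using b pr unfolding binv2_def binv_def by auto
    have m13: "m1 3 = of_nat (length w)" and m14: "m1 14 = 1" and m16: "m1 6 = of_nat j"
      using b1 pr h6 unfolding binv2_def binv_def by auto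
    define m2 where "m2 = m1(6 := of_nat (Suc j))"
    have b2: "binv2 w k wi m2" using b1 unfolding binv2_def binv_def m2_def by auto
    have s6: "m2 6 = of_nat (Suc j)" by (simp add: m2_def)
    have s13: "m2 13 = (\<Sum>j'<Suc j. tm w k wi (w ! j'))" using h1 h13 by (simp add: m2_def)
    show "\<exists>m'. reach prog (41, m) ((10 * length w + 23) * Suc d) (75, m') \<and> binv2 w k wi m' \<and>
     m' 13 = (\<Sum>j'<length w. tm w k wi (w ! j'))"
    proof (cases "Suc j < length w")
      case True
      have r2: "run prog 3 (72, m1) = (41, m2)" using True m13 m14 m16 by (simp add: ex m2_def add.commute)
      have re2: "reach prog (41, m) (10 * length w + 20 + 3) (41, m2)"
        by (rule reach_trans[OF re reach_run[OF r2 order_refl]])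
      have dd: "length w - Suc j = d" using d by simp
      obtain m' where re3: "reach prog (41, m2) ((10 * length w + 23) * d) (75, m')"
        and h2: "binv2 w k wi m'" "m' 13 = (\<Sum>j'<length w. tm w k wi (w ! j'))"
        using Suc.IH[rule_format, OF dd b2 True s6 s13] by blast
      show ?thesis
        apply (rule exI[of _ m'])
        using reach_trans[OF re2 re3] h2 by (simp add: algebra_simps)
    next
      case False
      then have n: "length w = Suc j" using j by simp
      have r2: "run prog 2 (72, m1) = (75, m2)" using n m13 m14 m16 by (simp add: ex m2_def add.commute)
      have re2: "reach prog (41, m) (10 * length w + 20 + 2) (75, m2)"
        by (rule reach_trans[OF re reach_run[OF r2 order_refl]])
      show ?thesis
        apply (rule exI[of _ m2])
        using reach_mono[OF re2] b2 s13 n by simp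
    qed
  qed
qed

lemma floor_frac: "0 \<le> (f::rat) \<Longrightarrow> f < 1 \<Longrightarrow> \<lfloor>f\<rfloor> = 0"
  by (simp add: floor_eq_iff)
lemma addr_frac: "0 \<le> f \<Longrightarrow> f < 1 \<Longrightarrow> addr (of_nat s + f) = s"
  unfolding addr_def by (simp add: floor_frac)
lemma addr_frac30: "0 \<le> f \<Longrightarrow> f < 1 \<Longrightarrow> addr (of_nat s + f + 30) = s + 30"
  unfolding addr_def by (simp add: floor_frac)

lemma copy_iter:
  assumes f: "0 \<le> f" "f < 1" and s: "3 \<le> s" and m0: "m 0 = of_nat s + f"
  shows "\<exists>m1. run prog 8 (13, m) = (if 3 \<le> s - 1 then 13 else 21, m1) \<and>
     m1 0 = of_nat (s - 1) + f \<and> (\<forall>a\<ge>3. m1 a = (if a = s + 30 then m s else m a))"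
proof -
  have e: "of_nat s + f - 1 = of_nat (s - 1) + f" using s by (simp add: of_nat_diff)
  have c: "(3 \<le> of_nat (s - 1) + f) = (3 \<le> s - 1)"
  proof
    assume "3 \<le> of_nat (s - 1) + f"
    then have "(3::rat) < of_nat (s - 1) + 1" using f by linarith
    then show "3 \<le> s - 1" by linarith
  next
    assume "3 \<le> s - 1"
    then show "3 \<le> of_nat (s - 1) + f" using f by linarith
  qed
  have c2: "(4 \<le> of_nat s + f) = (3 \<le> s - Suc 0)"
  proof
    assume "4 \<le> of_nat s + f"
    then have "(4::rat) < of_nat s + 1" using f by linarith
    then show "3 \<le> s - Suc 0" by linarith
  next
    assume "3 \<le> s - Suc 0"
    then show "4 \<le> of_nat s + f" using f by linarith
  qed
  show ?thesis
    using f s by (simp add: ex m0 addr_frac addr_frac30 e c c2)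
qed


lemma copy_loop:
  assumes f: "0 \<le> f" "f < 1"
  shows "\<forall>s m. s - 2 = d \<longrightarrow> 3 \<le> s \<longrightarrow> s \<le> H \<longrightarrow> m 0 = of_nat s + f \<longrightarrow>
     (\<forall>a\<ge>3. m a = (if s + 30 < a \<and> a \<le> H + 30 then mz (a - 30) else mz a)) \<longrightarrow>
   (\<exists>m'. reach prog (13, m) (8 * d) (21, m') \<and> m' 0 = 2 + f \<and>
     (\<forall>a\<ge>3. m' a = (if 33 \<le> a \<and> a \<le> H + 30 then mz (a - 30) else mz a)))"
proof (induction d)
  case 0
  then show ?case by auto
next
  case (Suc d)
  show ?case
  proof (intro allI impI)
    fix s m
    assume d: "s - 2 = Suc d" and s: "3 \<le> s" and sH: "s \<le> H" and h0: "m 0 = of_nat s + f"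
      and inv: "\<forall>a\<ge>3. m a = (if s + 30 < a \<and> a \<le> H + 30 then mz (a - 30) else mz a)"
    obtain m1 where r: "run prog 8 (13, m) = (if 3 \<le> s - 1 then 13 else 21, m1)"
      and h1: "m1 0 = of_nat (s - 1) + f" and u: "\<forall>a\<ge>3. m1 a = (if a = s + 30 then m s else m a)"
      using copy_iter[where f=f and s=s and m=m, OF f s h0] by blast
    have ms: "m s = mz s" using inv s by simp
    have inv1: "\<forall>a\<ge>3. m1 a = (if s - 1 + 30 < a \<and> a \<le> H + 30 then mz (a - 30) else mz a)"
      using u inv ms s sH by auto
    show "\<exists>m'. reach prog (13, m) (8 * Suc d) (21, m') \<and> m' 0 = 2 + f \<and>
     (\<forall>a\<ge>3. m' a = (if 33 \<le> a \<and> a \<le> H + 30 then mz (a - 30) else mz a))"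
    proof (cases "3 \<le> s - 1")
      case True
      have re: "reach prog (13, m) 8 (13, m1)" using reach_run[OF r] True by simp
      have dd: "s - 1 - 2 = d" using d by simp
      have sH': "s - 1 \<le> H" using sH by simp
      obtain m' where re2: "reach prog (13, m1) (8 * d) (21, m')" and h: "m' 0 = 2 + f"
        "\<forall>a\<ge>3. m' a = (if 33 \<le> a \<and> a \<le> H + 30 then mz (a - 30) else mz a)"
        using Suc.IH[THEN spec[of _ "s - 1"], THEN spec[of _ m1]] dd True sH' h1 inv1 by blast
      show ?thesis using reach_trans[OF re re2] h by auto
    next
      case False
      then have s3: "s = 3" using s by simp
      have re: "reach prog (13, m) (8 * Suc d) (21, m1)" using reach_run[OF r] False by simp
      show ?thesis
        apply (rule exI[of _ m1])
        using re h1 inv1 s3 by auto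
    qed
  qed
qed


lemma addr_mul: "addr (numeral c * of_nat n) = numeral c * n"
  by (metis addr_nat of_nat_mult of_nat_numeral)
lemma addr_mul1: "addr (1 + numeral c * of_nat n) = 1 + numeral c * n"
  by (metis addr_nat of_nat_mult of_nat_numeral of_nat_add of_nat_1)

lemma prog_step_1': "step prog (Suc 0, m) = (2, m(0 := m 0 + m 0))"
  using prog_step_1 by simp

lemma addr_mul1': "addr (numeral c * of_nat n + 1) = numeral c * n + 1"
  by (metis addr_nat of_nat_mult of_nat_numeral of_nat_add of_nat_1)

lemma prefix:
  assumes n: "0 < length w"
  shows "\<exists>ma. run prog 13 (0, input_mem k w i) = (13, ma) \<and>
    ma 0 = of_nat (4 * length w + 1) + of_nat (length w) / (of_nat (length w) + 1) \<and>
    (\<forall>a\<ge>3. ma a = ((input_mem k w i)(4 * length w := of_nat k, 4 * length w + 1 := of_nat i)) a)"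
proof -
  have i0: "input_mem k w i 0 = of_nat (length w)" "input_mem k w i 1 = of_nat k"
    "input_mem k w i 2 = of_nat i" "input_mem k w i (Suc 0) = of_nat k" by (simp_all add: input_mem_def)
  show ?thesis
    using n by (simp add: ex i0 addr_mul addr_mul1 addr_mul1' prog_step_1')
qed

lemma addr_mul2: "addr (numeral c * of_nat n + numeral d) = numeral c * n + numeral d"
  by (metis addr_nat of_nat_mult of_nat_numeral of_nat_add)
lemma addr_mul3: "addr (numeral c * of_nat n + numeral d + 1) = numeral c * n + numeral d + 1"
  by (metis addr_nat of_nat_mult of_nat_numeral of_nat_add of_nat_1)

lemma addr_mul4: "addr (numeral d + numeral c * of_nat n) = numeral d + numeral c * n"
  by (metis addr_nat of_nat_mult of_nat_numeral of_nat_add)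

lemma mid:
  assumes m0: "m 0 = 2 + of_nat n / (of_nat n + 1)"
  shows "\<exists>m'. run prog 5 (21, m) = (26, m') \<and> m' 0 = of_nat n \<and> (\<forall>a\<ge>3. m' a = m a)"
proof -
  have e: "(of_nat n / (of_nat n + 1)) / (1 - of_nat n / (of_nat n + 1)) = (of_nat n :: rat)"
  proof -
    have p: "(of_nat n + 1 :: rat) \<noteq> 0" by (metis of_nat_Suc of_nat_neq_0 add.commute)
    show ?thesis using p by (simp add: field_simps)
  qed
  show ?thesis using e by (simp add: ex m0)
qed

lemma initB:
  assumes n: "0 < length w" and i: "i < length w" and h0: "mA 0 = of_nat (length w)"
    and inv: "\<forall>a\<ge>3. mA a = (if 33 \<le> a \<and> a \<le> 4 * length w + 1 + 30 then
        ((input_mem k w i)(4 * length w := of_nat k, 4 * length w + 1 := of_nat i)) (a - 30)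
        else ((input_mem k w i)(4 * length w := of_nat k, 4 * length w + 1 := of_nat i)) a)"
  shows "\<exists>m. run prog 15 (26, mA) = (41, m) \<and> binv2 w k (w ! i) m \<and> m 6 = 0 \<and> m 13 = 0"
proof -
  let ?n = "length w"
  have arr: "\<forall>j<?n. mA (33 + j) = of_nat (w ! j)"
  proof (intro allI impI)
    fix j assume j: "j < ?n"
    have "33 + j - 30 = 3 + j" by simp
    moreover have "3 + j \<noteq> 4 * ?n" "3 + j \<noteq> 4 * ?n + 1" using j n by linarith+
    ultimately show "mA (33 + j) = of_nat (w ! j)" using inv[rule_format, of "33 + j"] j
      by (simp add: input_mem_def)
  qed
  have n3: "3 \<le> 4 * ?n" using n by linarith
  have ak: "mA (4 * ?n + 30) = of_nat k"
    using inv[rule_format, of "4 * ?n + 30"] n3 by simp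
  have ai: "mA (31 + 4 * ?n) = of_nat i"
    using inv[rule_format, of "31 + 4 * ?n"] n3 by simp
  have awi: "mA (33 + i) = of_nat (w ! i)" using arr i by simp
  show ?thesis
  proof -
    have "\<exists>m. run prog 15 (26, mA) = (41, m) \<and> m 3 = of_nat ?n \<and> m 4 = of_nat k \<and>
       m 5 = of_nat (w ! i) \<and> m 14 = 1 \<and> m 17 = 0 \<and> m 6 = 0 \<and> m 13 = 0 \<and>
       (\<forall>a\<ge>33. m a = mA a)"
      by (simp add: ex h0 ak ai awi addr_mul2 addr_mul3 addr_mul4)
    then obtain m where "run prog 15 (26, mA) = (41, m)" "m 3 = of_nat ?n" "m 4 = of_nat k"
       "m 5 = of_nat (w ! i)" "m 14 = 1" "m 17 = 0" "m 6 = 0" "m 13 = 0"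
       "\<forall>a\<ge>33. m a = mA a" by blast
    then show ?thesis using arr unfolding binv2_def binv_def by auto
  qed
qed


lemma prog_correct:
  assumes i: "i < length w"
  shows "\<exists>m'. reach prog (0, input_mem k w i)
     (13 + 8 * (4 * length w - 1) + 5 + 15 + (10 * length w + 23) * length w + 1) (76, m') \<and>
     m' 0 = (\<Sum>j<length w. tm w k (w ! i) (w ! j))"
proof -
  let ?n = "length w"
  define f :: rat where "f = of_nat ?n / (of_nat ?n + 1)"
  have n: "0 < ?n" using i by linarith
  have f0: "0 \<le> f" unfolding f_def by simp
  have f1: "f < 1" unfolding f_def by (simp add: divide_less_eq)
  define m0 where "m0 = (input_mem k w i)(4 * ?n := of_nat k, 4 * ?n + 1 := of_nat i)"
  obtain ma where r1: "run prog 13 (0, input_mem k w i) = (13, ma)"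
    and ma0: "ma 0 = of_nat (4 * ?n + 1) + f" and ma: "\<forall>a\<ge>3. ma a = m0 a"
    using prefix[OF n, of k i] unfolding f_def m0_def by blast
  have s3: "3 \<le> 4 * ?n + 1" using n by linarith
  have inv0: "\<forall>a\<ge>3. ma a = (if 4 * ?n + 1 + 30 < a \<and> a \<le> 4 * ?n + 1 + 30 then m0 (a - 30) else m0 a)"
    using ma by simp
  obtain mc where r2: "reach prog (13, ma) (8 * (4 * ?n - 1)) (21, mc)" and mc0: "mc 0 = 2 + f"
    and mc: "\<forall>a\<ge>3. mc a = (if 33 \<le> a \<and> a \<le> 4 * ?n + 1 + 30 then m0 (a - 30) else m0 a)"
    using copy_loop[OF f0 f1, where d="4 * ?n - 1" and H="4 * ?n + 1" and mz=m0, THEN spec[of _ "4 * ?n + 1"],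
       THEN spec[of _ ma]] s3 ma0 inv0 by auto
  obtain md where r3: "run prog 5 (21, mc) = (26, md)" and md0: "md 0 = of_nat ?n"
    and md: "\<forall>a\<ge>3. md a = mc a"
    using mid[where m=mc and n="length w"] mc0 unfolding f_def by blast
  have mdinv: "\<forall>a\<ge>3. md a = (if 33 \<le> a \<and> a \<le> 4 * ?n + 1 + 30 then
        ((input_mem k w i)(4 * ?n := of_nat k, 4 * ?n + 1 := of_nat i)) (a - 30)
        else ((input_mem k w i)(4 * ?n := of_nat k, 4 * ?n + 1 := of_nat i)) a)"
    using md mc unfolding m0_def by simp
  obtain me where r4: "run prog 15 (26, md) = (41, me)" and be: "binv2 w k (w ! i) me"
    and me6: "me 6 = 0" and me13: "me 13 = 0"
    using initB[OF n i md0 mdinv] by blast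
  have me6': "me 6 = of_nat 0" and me13': "me 13 = (\<Sum>j'<0. tm w k (w ! i) (w ! j'))"
    using me6 me13 by simp_all
  obtain mf where r5: "reach prog (41, me) ((10 * ?n + 23) * ?n) (75, mf)" and bf: "binv2 w k (w ! i) mf"
    and mf13: "mf 13 = (\<Sum>j'<?n. tm w k (w ! i) (w ! j'))"
    using outer_loop[where w=w and d="?n" and k=k and wi="w ! i", THEN spec[of _ 0], THEN spec[of _ me]]
      be n me6' me13' by auto
  have mf17: "mf 17 = 0" using bf unfolding binv2_def binv_def by simp
  have r6: "run prog 1 (75, mf) = (76, mf(0 := mf 13 + mf 17))" by (simp add: ex)
  have "reach prog (0, input_mem k w i) (13 + 8 * (4 * ?n - 1) + 5 + 15 + (10 * ?n + 23) * ?n + 1)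
      (76, mf(0 := mf 13 + mf 17))"
    by (rule reach_trans[OF reach_trans[OF reach_trans[OF reach_trans[OF reach_trans[OF
         reach_run[OF r1 order_refl] r2] reach_run[OF r3 order_refl]] reach_run[OF r4 order_refl]] r5]
         reach_run[OF r6 order_refl]])
  then show ?thesis using mf13 mf17 by auto
qed


lemma cg_card: "cg w v l = card {l'. l' < l \<and> v \<le> w ! l'}"
proof (induction l)
  case 0 then show ?case by simp
next
  case (Suc l)
  have e: "{l'. l' < Suc l \<and> v \<le> w ! l'} = {l'. l' < l \<and> v \<le> w ! l'} \<union> (if v \<le> w ! l then {l} else {})"
    by (auto simp: less_Suc_eq)
  show ?case using Suc by (simp add: e card_Un_disjoint)
qed

lemma ce_card: "ce w v l = card {l'. l' < l \<and> w ! l' = v}"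
proof (induction l)
  case 0 then show ?case by simp
next
  case (Suc l)
  have e: "{l'. l' < Suc l \<and> w ! l' = v} = {l'. l' < l \<and> w ! l' = v} \<union> (if w ! l = v then {l} else {})"
    by (auto simp: less_Suc_eq)
  show ?case using Suc by (simp add: e card_Un_disjoint)
qed

lemma pm_max: "pm w v l = Max (insert 0 {w ! l' | l'. l' < l \<and> w ! l' < v})"
proof (induction l)
  case 0 then show ?case by simp
next
  case (Suc l)
  have fin: "finite {w ! l' | l'. l' < l \<and> w ! l' < v}" by simp
  have e: "{w ! l' | l'. l' < Suc l \<and> w ! l' < v} = {w ! l' | l'. l' < l \<and> w ! l' < v} \<union>
      (if w ! l < v then {w ! l} else {})"
    by (auto simp: less_Suc_eq)
  show ?case
  proof (cases "w ! l < v")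
    case True
    have mx: "Max (insert 0 {w ! l' | l'. l' < Suc l \<and> w ! l' < v}) =
        max (w ! l) (Max (insert 0 {w ! l' | l'. l' < l \<and> w ! l' < v}))"
      using fin True by (simp add: e Max_insert[symmetric] insert_commute)
    have ps: "pm w v (Suc l) = max (w ! l) (pm w v l)" using True by (simp add: max_def)
    show ?thesis by (simp only: mx ps Suc.IH)
  next
    case False
    then show ?thesis using Suc by (simp add: e)
  qed
qed


definition FF :: "nat \<Rightarrow> nat \<Rightarrow> rat" where "FF k c = of_nat (min k c) / of_nat c"

lemma pm_ge: "l < length w \<Longrightarrow> w ! l < v \<Longrightarrow> w ! l \<le> pm w v (length w)"
  unfolding pm_max by (rule Max_ge) auto

lemma pm_in: "pm w v (length w) = 0 \<or> (\<exists>l<length w. w ! l < v \<and> pm w v (length w) = w ! l)"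
proof -
  have "pm w v (length w) \<in> insert 0 {w ! l' | l'. l' < length w \<and> w ! l' < v}"
    unfolding pm_max by (rule Max_in) auto
  then show ?thesis by auto
qed

lemma pm_le: "pm w v (length w) \<le> v"
  using pm_in[of w v] by auto

lemma pm_lt: "0 < v \<Longrightarrow> pm w v (length w) < v"
  using pm_in[of w v] by auto

lemma M5_point:
  assumes i: "i < length w" and t: "t \<in> {1..w ! i}"
  shows "FF k (cg w t (length w)) = (\<Sum>j<length w.
      (if pm w (w ! j) (length w) < t \<and> t \<le> w ! j then
        FF k (cg w (w ! j) (length w)) / of_nat (ce w (w ! j) (length w)) else 0))"
proof -
  let ?n = "length w"
  let ?V = "{w ! l | l. l < ?n \<and> t \<le> w ! l}"
  have finV: "finite ?V" by simp
  have neV: "?V \<noteq> {}" using i t by auto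
  obtain j0 where j0: "j0 < ?n" "t \<le> w ! j0" "w ! j0 = Min ?V"
    using Min_in[OF finV neV] by auto
  have minle: "\<And>l. l < ?n \<Longrightarrow> t \<le> w ! l \<Longrightarrow> w ! j0 \<le> w ! l"
    using j0(3) finV by (auto intro: Min_le)
  have pv0: "pm w (w ! j0) ?n < t"
  proof -
    from pm_in[of w "w ! j0"] show ?thesis
    proof
      assume "pm w (w ! j0) ?n = 0" then show ?thesis using t by simp
    next
      assume "\<exists>l<?n. w ! l < w ! j0 \<and> pm w (w ! j0) ?n = w ! l"
      then obtain l where l: "l < ?n" "w ! l < w ! j0" "pm w (w ! j0) ?n = w ! l" by blast
      have "\<not> t \<le> w ! l" using minle[OF l(1)] l(2) by fastforce
      then show ?thesis using l(3) by simp
    qed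
  qed
  define E where "E = {j. j < ?n \<and> w ! j = w ! j0}"
  have E: "\<And>j. j < ?n \<Longrightarrow> (pm w (w ! j) ?n < t \<and> t \<le> w ! j) = (j \<in> E)"
  proof -
    fix j assume j: "j < ?n"
    show "(pm w (w ! j) ?n < t \<and> t \<le> w ! j) = (j \<in> E)"
    proof
      assume h: "pm w (w ! j) ?n < t \<and> t \<le> w ! j"
      have a: "w ! j0 \<le> w ! j" using minle[OF j] h by simp
      have "\<not> w ! j0 < w ! j"
      proof
        assume "w ! j0 < w ! j"
        then have "w ! j0 \<le> pm w (w ! j) ?n" using pm_ge[OF j0(1)] by simp
        then show False using h j0(2) by simp
      qed
      then show "j \<in> E" using a j unfolding E_def by simp
    next
      assume "j \<in> E"
      then show "pm w (w ! j) ?n < t \<and> t \<le> w ! j" using pv0 j0 unfolding E_def by simp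
    qed
  qed
  have cgeq: "cg w t ?n = cg w (w ! j0) ?n"
  proof -
    have "{l. l < ?n \<and> t \<le> w ! l} = {l. l < ?n \<and> w ! j0 \<le> w ! l}"
      using minle j0(2) by (auto intro: order_trans)
    then show ?thesis by (simp add: cg_card)
  qed
  have ceE: "ce w (w ! j0) ?n = card E" unfolding E_def ce_card by simp
  have finE: "finite E" unfolding E_def by simp
  have int_eq: "{..<?n} \<inter> E = E" unfolding E_def by auto
  have j0E: "j0 \<in> E" unfolding E_def using j0 by simp
  then have cE: "card E \<noteq> 0" using finE by auto
  have "(\<Sum>j<?n. (if pm w (w ! j) ?n < t \<and> t \<le> w ! j then
        FF k (cg w (w ! j) ?n) / of_nat (ce w (w ! j) ?n) else 0)) =
      (\<Sum>j<?n. (if j \<in> E then FF k (cg w (w ! j0) ?n) / of_nat (card E) else 0))"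
    by (rule sum.cong) (auto simp: E ceE E_def)
  also have "\<dots> = of_nat (card E) * (FF k (cg w (w ! j0) ?n) / of_nat (card E))"
    using int_eq by (simp add: sum.If_cases)
  also have "\<dots> = FF k (cg w t ?n)" using cE by (simp add: cgeq)
  finally show ?thesis by simp
qed


lemma card_interval:
  assumes i: "i < length w" and j: "j < length w"
  shows "card {t\<in>{1..w ! i}. pm w (w ! j) (length w) < t \<and> t \<le> w ! j} =
    (if w ! j \<le> w ! i then w ! j - pm w (w ! j) (length w) else 0)"
proof (cases "w ! j \<le> w ! i")
  case True
  have "{t\<in>{1..w ! i}. pm w (w ! j) (length w) < t \<and> t \<le> w ! j} = {pm w (w ! j) (length w) <.. w ! j}"
    using True by auto
  then show ?thesis using True by simp
next
  case False
  have "w ! i \<le> pm w (w ! j) (length w)" using pm_ge[OF i] False by simp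
  then have "{t\<in>{1..w ! i}. pm w (w ! j) (length w) < t \<and> t \<le> w ! j} = {}" by auto
  then show ?thesis using False by simp
qed

lemma M5:
  assumes i: "i < length w"
  shows "(\<Sum>t\<in>{1..w ! i}. FF k (cg w t (length w))) = (\<Sum>j<length w. tm w k (w ! i) (w ! j))"
proof -
  let ?n = "length w"
  have "(\<Sum>t\<in>{1..w ! i}. FF k (cg w t ?n)) = (\<Sum>t\<in>{1..w ! i}. \<Sum>j<?n.
      (if pm w (w ! j) ?n < t \<and> t \<le> w ! j then
        FF k (cg w (w ! j) ?n) / of_nat (ce w (w ! j) ?n) else 0))"
    by (rule sum.cong[OF refl]) (rule M5_point[OF i])
  also have "\<dots> = (\<Sum>j<?n. \<Sum>t\<in>{1..w ! i}.
      (if pm w (w ! j) ?n < t \<and> t \<le> w ! j then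
        FF k (cg w (w ! j) ?n) / of_nat (ce w (w ! j) ?n) else 0))"
    by (rule sum.swap)
  also have "\<dots> = (\<Sum>j<?n. of_nat (card {t\<in>{1..w ! i}. pm w (w ! j) ?n < t \<and> t \<le> w ! j}) *
        (FF k (cg w (w ! j) ?n) / of_nat (ce w (w ! j) ?n)))"
    by (rule sum.cong[OF refl]) (simp add: sum.If_cases Int_def)
  also have "\<dots> = (\<Sum>j<length w. tm w k (w ! i) (w ! j))"
  proof (rule sum.cong[OF refl])
    fix j assume "j \<in> {..<?n}"
    then have j: "j < ?n" by simp
    have pl: "pm w (w ! j) ?n \<le> w ! j" by (rule pm_le)
    show "of_nat (card {t\<in>{1..w ! i}. pm w (w ! j) ?n < t \<and> t \<le> w ! j}) *
        (FF k (cg w (w ! j) ?n) / of_nat (ce w (w ! j) ?n)) = tm w k (w ! i) (w ! j)"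
      using pl by (subst card_interval[OF i j]) (simp add: tm_def FF_def of_nat_diff)
  qed
  finally show ?thesis .
qed


lemma sum_layer:
  assumes "finite S" "\<forall>j\<in>S. w ! j \<le> W"
  shows "(\<Sum>j\<in>S. w ! j) = (\<Sum>t\<in>{1..W}. card {j\<in>S. t \<le> w ! j})"
proof -
  have "(\<Sum>j\<in>S. w ! j) = (\<Sum>j\<in>S. \<Sum>t\<in>{1..W}. if t \<le> w ! j then 1 else 0)"
  proof (rule sum.cong[OF refl])
    fix j assume "j \<in> S"
    then have "{t\<in>{1..W}. t \<le> w ! j} = {1..w ! j}" using assms(2) by auto
    then show "w ! j = (\<Sum>t\<in>{1..W}. if t \<le> w ! j then 1 else 0)"
      by (simp add: sum.If_cases Int_def)
  qed
  also have "\<dots> = (\<Sum>t\<in>{1..W}. \<Sum>j\<in>S. if t \<le> w ! j then 1 else 0)" by (rule sum.swap)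
  also have "\<dots> = (\<Sum>t\<in>{1..W}. card {j\<in>S. t \<le> w ! j})"
    using assms(1) by (simp add: sum.If_cases Int_def)
  finally show ?thesis .
qed

lemma kmax_layer:
  assumes fin: "finite S" and W: "\<forall>j\<in>S. w ! j \<le> W"
  shows "kmax_game k w S = of_nat (\<Sum>t\<in>{1..W}. min k (card {j\<in>S. t \<le> w ! j}))"
proof -
  let ?V = "\<Sum>t\<in>{1..W}. min k (card {j\<in>S. t \<le> w ! j})"
  let ?X = "{(\<Sum>j\<in>S'. w ! j) | S'. S' \<subseteq> S \<and> card S' \<le> k}"
  have finX: "finite ?X"
  proof -
    have "?X \<subseteq> (\<lambda>S'. \<Sum>j\<in>S'. w ! j) ` Pow S" by auto
    then show ?thesis using fin by (meson finite_Pow_iff finite_imageI finite_subset)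
  qed
  have ub: "\<forall>x\<in>?X. x \<le> ?V"
  proof
    fix x assume "x \<in> ?X"
    then obtain S' where S': "S' \<subseteq> S" "card S' \<le> k" and x: "x = (\<Sum>j\<in>S'. w ! j)" by blast
    have fS': "finite S'" using S'(1) fin finite_subset by blast
    have "x = (\<Sum>t\<in>{1..W}. card {j\<in>S'. t \<le> w ! j})"
      using x sum_layer[OF fS'] W S'(1) by auto
    also have "\<dots> \<le> ?V"
    proof (rule sum_mono)
      fix t assume "t \<in> {1..W}"
      have "card {j\<in>S'. t \<le> w ! j} \<le> card S'" using fS' by (intro card_mono) auto
      moreover have "card {j\<in>S'. t \<le> w ! j} \<le> card {j\<in>S. t \<le> w ! j}"
        using fin S'(1) by (intro card_mono) auto
      ultimately show "card {j\<in>S'. t \<le> w ! j} \<le> min k (card {j\<in>S. t \<le> w ! j})" using S'(2) by simp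
    qed
    finally show "x \<le> ?V" .
  qed
  define Y where "Y = {S'. S' \<subseteq> S \<and> card S' = min k (card S)}"
  have finY: "finite Y" unfolding Y_def using fin by simp
  obtain S0 where "S0 \<subseteq> S" "card S0 = min k (card S)" "finite S0"
    using obtain_subset_with_card_n[of "min k (card S)" S] by auto
  then have neY: "Y \<noteq> {}" unfolding Y_def by auto
  let ?sm = "\<lambda>S'. \<Sum>j\<in>S'. w ! j"
  have "Max (?sm ` Y) \<in> ?sm ` Y" using finY neY by (intro Max_in) auto
  then obtain Ss where Ss: "Ss \<in> Y" and mx: "?sm Ss = Max (?sm ` Y)" by (metis imageE)
  have maxi: "\<And>S'. S' \<in> Y \<Longrightarrow> ?sm S' \<le> ?sm Ss"
    using mx finY by auto
  have SsS: "Ss \<subseteq> S" and cSs: "card Ss = min k (card S)" using Ss unfolding Y_def by auto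
  have fSs: "finite Ss" using SsS fin finite_subset by blast
  have eqc: "card {j\<in>Ss. t \<le> w ! j} = min k (card {j\<in>S. t \<le> w ! j})" for t
  proof (rule antisym)
    have "card {j\<in>Ss. t \<le> w ! j} \<le> card Ss" using fSs by (intro card_mono) auto
    moreover have "card {j\<in>Ss. t \<le> w ! j} \<le> card {j\<in>S. t \<le> w ! j}"
      using fin SsS by (intro card_mono) auto
    ultimately show "card {j\<in>Ss. t \<le> w ! j} \<le> min k (card {j\<in>S. t \<le> w ! j})" using cSs by simp
  next
    show "min k (card {j\<in>S. t \<le> w ! j}) \<le> card {j\<in>Ss. t \<le> w ! j}"
    proof (rule ccontr)
      assume lt: "\<not> ?thesis"
      have "\<not> {j\<in>S. t \<le> w ! j} \<subseteq> {j\<in>Ss. t \<le> w ! j}"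
      proof
        assume "{j\<in>S. t \<le> w ! j} \<subseteq> {j\<in>Ss. t \<le> w ! j}"
        then have "card {j\<in>S. t \<le> w ! j} \<le> card {j\<in>Ss. t \<le> w ! j}"
          using fSs by (intro card_mono) auto
        then show False using lt by simp
      qed
      then obtain x where x: "x \<in> S" "t \<le> w ! x" "x \<notin> Ss" by blast
      have "\<not> Ss \<subseteq> {j\<in>Ss. t \<le> w ! j}"
      proof
        assume "Ss \<subseteq> {j\<in>Ss. t \<le> w ! j}"
        then have "card Ss \<le> card {j\<in>Ss. t \<le> w ! j}" using fSs by (intro card_mono) auto
        moreover have "min k (card {j\<in>S. t \<le> w ! j}) \<le> card Ss"
          using cSs card_mono[OF fin, of "{j\<in>S. t \<le> w ! j}"] by auto
        ultimately show False using lt by simp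
      qed
      then obtain y where y: "y \<in> Ss" "\<not> t \<le> w ! y" by blast
      define S2 where "S2 = insert x (Ss - {y})"
      have "S2 \<in> Y"
      proof -
        have "card S2 = card Ss" unfolding S2_def using fSs x(3) y(1)
          by (simp add: card_Suc_Diff1 card_gt_0_iff Suc_pred[of "card Ss"]; metis card_0_eq empty_iff neq0_conv Suc_pred)
        moreover have "S2 \<subseteq> S" unfolding S2_def using x(1) SsS by auto
        ultimately show ?thesis unfolding Y_def using cSs by simp
      qed
      then have le: "?sm S2 \<le> ?sm Ss" by (rule maxi)
      have "?sm S2 = w ! x + ?sm (Ss - {y})" unfolding S2_def using fSs x(3) by simp
      moreover have "?sm Ss = w ! y + ?sm (Ss - {y})" using fSs y(1) by (simp add: sum.remove)
      ultimately show False using le x(2) y(2) by simp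
    qed
  qed
  have VX: "?V \<in> ?X"
  proof -
    have "?sm Ss = (\<Sum>t\<in>{1..W}. card {j\<in>Ss. t \<le> w ! j})"
      using sum_layer[OF fSs, of w W] W SsS by auto
    also have "\<dots> = ?V" using eqc by simp
    finally have "?sm Ss = ?V" .
    moreover have "card Ss \<le> k" using cSs by simp
    ultimately show ?thesis using SsS by (metis (mono_tags, lifting) mem_Collect_eq)
  qed
  have "Max ?X = ?V" using finX ub VX by (intro Max_eqI) auto
  then show ?thesis unfolding kmax_game_def by (simp only:)
qed


definition cw :: "nat \<Rightarrow> nat \<Rightarrow> rat" where
  "cw n s = of_nat (fact s * fact (n - s - 1)) / of_nat (fact n)"

lemma cw_step:
  assumes "s \<le> m"
  shows "cw (m + 2) s + cw (m + 2) (s + 1) = cw (m + 1) s"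
proof -
  obtain r where m: "m = s + r" using assms le_Suc_ex by blast
  define a :: rat where "a = fact s"
  define b :: rat where "b = fact r"
  define F :: rat where "F = fact (m + 1)"
  have F0: "F \<noteq> 0" unfolding F_def by simp
  have m2: "(of_nat (m + 2) :: rat) \<noteq> 0" by simp
  have c1: "cw (m + 2) s = of_nat (r + 1) * (a * b) / (of_nat (m + 2) * F)"
  proof -
    have "m + 2 - s - 1 = Suc r" using m by simp
    moreover have "(fact (m + 2) :: rat) = of_nat (m + 2) * F"
      unfolding F_def by (simp add: numeral_2_eq_2 fact_Suc del: of_nat_add)
    ultimately show ?thesis unfolding cw_def a_def b_def by (simp add: fact_Suc algebra_simps)
  qed
  have c2: "cw (m + 2) (s + 1) = of_nat (s + 1) * (a * b) / (of_nat (m + 2) * F)"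
  proof -
    have "m + 2 - (s + 1) - 1 = r" using m by simp
    moreover have "(fact (m + 2) :: rat) = of_nat (m + 2) * F"
      unfolding F_def by (simp add: numeral_2_eq_2 fact_Suc del: of_nat_add)
    ultimately show ?thesis unfolding cw_def a_def b_def by (simp add: fact_Suc algebra_simps)
  qed
  have c3: "cw (m + 1) s = (a * b) / F"
  proof -
    have "m + 1 - s - 1 = r" using m by simp
    then show ?thesis unfolding cw_def a_def b_def F_def by (simp add: algebra_simps)
  qed
  have "of_nat (r + 1) * (a * b) / (of_nat (m + 2) * F) + of_nat (s + 1) * (a * b) / (of_nat (m + 2) * F)
     = (of_nat (r + 1) + of_nat (s + 1)) * (a * b) / (of_nat (m + 2) * F)"
    by (simp add: add_divide_distrib distrib_right)
  also have "(of_nat (r + 1) + of_nat (s + 1) :: rat) = of_nat (m + 2)" using m by simp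
  also have "of_nat (m + 2) * (a * b) / (of_nat (m + 2) * F) = (a * b) / F" using m2 by simp
  finally show ?thesis using c1 c2 c3 by simp
qed

lemma dummy:
  assumes fin: "finite M" and x: "x \<notin> M" and F: "\<forall>S\<subseteq>M. F (insert x S) = F S"
  shows "(\<Sum>S\<in>Pow (insert x M). cw (card M + 2) (card S) * F S) =
         (\<Sum>S\<in>Pow M. cw (card M + 1) (card S) * F S)"
proof -
  have disj: "Pow M \<inter> insert x ` Pow M = {}" using x by auto
  have inj: "inj_on (insert x) (Pow M)"
  proof (rule inj_onI)
    fix A B assume "A \<in> Pow M" "B \<in> Pow M" "insert x A = insert x B"
    then show "A = B" using x by (metis PowD insert_ident subsetD)
  qed
  have "(\<Sum>S\<in>Pow (insert x M). cw (card M + 2) (card S) * F S) =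
    (\<Sum>S\<in>Pow M. cw (card M + 2) (card S) * F S) +
    (\<Sum>S\<in>insert x ` Pow M. cw (card M + 2) (card S) * F S)"
    unfolding Pow_insert using fin disj by (intro sum.union_disjoint) auto
  also have "(\<Sum>S\<in>insert x ` Pow M. cw (card M + 2) (card S) * F S) =
     (\<Sum>S\<in>Pow M. cw (card M + 2) (card S + 1) * F S)"
  proof (subst sum.reindex[OF inj], rule sum.cong[OF refl])
    fix S assume S: "S \<in> Pow M"
    then have "finite S" "x \<notin> S" using fin x finite_subset by auto
    then show "((\<lambda>S. cw (card M + 2) (card S) * F S) \<circ> insert x) S = cw (card M + 2) (card S + 1) * F S"
      using F S by simp
  qed
  also have "(\<Sum>S\<in>Pow M. cw (card M + 2) (card S) * F S) + (\<Sum>S\<in>Pow M. cw (card M + 2) (card S + 1) * F S)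
     = (\<Sum>S\<in>Pow M. cw (card M + 1) (card S) * F S)"
    unfolding sum.distrib[symmetric]
  proof (rule sum.cong[OF refl])
    fix S assume S: "S \<in> Pow M"
    then have "card S \<le> card M" using fin by (simp add: card_mono)
    then show "cw (card M + 2) (card S) * F S + cw (card M + 2) (card S + 1) * F S =
        cw (card M + 1) (card S) * F S"
      using cw_step[of "card S" "card M"] by (simp add: distrib_right[symmetric])
  qed
  finally show ?thesis .
qed

lemma sum_Pow_card:
  assumes fin: "finite M"
  shows "(\<Sum>S\<in>Pow M. g (card S)) = (\<Sum>s\<in>{0..card M}. of_nat (card M choose s) * (g s :: rat))"
proof -
  have "(\<Sum>S\<in>Pow M. g (card S)) = (\<Sum>s\<in>{0..card M}. \<Sum>S\<in>{S\<in>Pow M. card S = s}. g (card S))"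
    by (rule sum.group[symmetric]) (use fin in \<open>auto simp: card_mono\<close>)
  also have "\<dots> = (\<Sum>s\<in>{0..card M}. of_nat (card M choose s) * g s)"
  proof (rule sum.cong[OF refl])
    fix s
    have "(\<Sum>S\<in>{S\<in>Pow M. card S = s}. g (card S)) = (\<Sum>S\<in>{S\<in>Pow M. card S = s}. g s)"
      by (rule sum.cong) auto
    also have "\<dots> = of_nat (card {S. S \<subseteq> M \<and> card S = s}) * g s" by simp
    also have "\<dots> = of_nat (card M choose s) * g s" using n_subsets[OF fin, of s] by simp
    finally show "(\<Sum>S\<in>{S\<in>Pow M. card S = s}. g (card S)) = of_nat (card M choose s) * g s" .
  qed
  finally show ?thesis .
qed


lemma uniform_base:
  assumes fin: "finite A" and i: "i \<in> A"
  shows "(\<Sum>S\<in>Pow (A - {i}). cw (card A) (card S) * (if card (S \<inter> A) < k then 1 else 0)) =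
    of_nat (min k (card A)) / of_nat (card A)"
proof -
  let ?a = "card A"
  have a0: "0 < ?a" using fin i card_gt_0_iff by blast
  have cM: "card (A - {i}) = ?a - 1" using fin i by simp
  have "(\<Sum>S\<in>Pow (A - {i}). cw ?a (card S) * (if card (S \<inter> A) < k then 1 else 0)) =
     (\<Sum>S\<in>Pow (A - {i}). cw ?a (card S) * (if card S < k then 1 else 0))"
  proof (rule sum.cong[OF refl])
    fix S assume "S \<in> Pow (A - {i})"
    then have "S \<inter> A = S" by auto
    then show "cw ?a (card S) * (if card (S \<inter> A) < k then 1 else 0) =
      cw ?a (card S) * (if card S < k then 1 else 0)" by simp
  qed
  also have "\<dots> = (\<Sum>s\<in>{0..?a - 1}. of_nat ((?a - 1) choose s) * (cw ?a s * (if s < k then 1 else 0)))"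
    using sum_Pow_card[of "A - {i}" "\<lambda>s. cw ?a s * (if s < k then 1 else 0)"] fin cM by simp
  also have "\<dots> = (\<Sum>s\<in>{0..?a - 1}. (if s < k then 1 / of_nat ?a else 0))"
  proof (rule sum.cong[OF refl])
    fix s assume "s \<in> {0..?a - 1}"
    then have s: "s \<le> ?a - 1" by simp
    have bf: "fact s * fact (?a - 1 - s) * (?a - 1 choose s) = fact (?a - 1)"
      by (rule binomial_fact_lemma[OF s])
    have e: "?a - s - 1 = ?a - 1 - s" by simp
    have fa: "(fact ?a :: rat) = of_nat ?a * fact (?a - 1)"
      using a0 by (metis Suc_pred' fact_Suc of_nat_fact)
    have "of_nat ((?a - 1) choose s) * cw ?a s = (1 / of_nat ?a :: rat)"
    proof -
      have "of_nat ((?a - 1) choose s) * cw ?a s =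
          of_nat (fact s * fact (?a - 1 - s) * (?a - 1 choose s)) / (fact ?a :: rat)"
        unfolding cw_def e by (simp add: of_nat_mult)
      also have "\<dots> = fact (?a - 1) / (of_nat ?a * fact (?a - 1))" unfolding bf fa by simp
      also have "\<dots> = 1 / of_nat ?a" by simp
      finally show ?thesis .
    qed
    then show "of_nat ((?a - 1) choose s) * (cw ?a s * (if s < k then 1 else 0)) =
        (if s < k then 1 / of_nat ?a else 0)" by simp
  qed
  also have "\<dots> = of_nat (card {s\<in>{0..?a - 1}. s < k}) * (1 / of_nat ?a)"
    by (simp add: sum.If_cases Int_def)
  also have "card {s\<in>{0..?a - 1}. s < k} = min k ?a"
  proof -
    have "{s\<in>{0..?a - 1}. s < k} = {0..<min k ?a}" using a0 by auto
    then show ?thesis by simp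
  qed
  finally show ?thesis by simp
qed

lemma uniform:
  assumes finB: "finite B"
  shows "finite A \<Longrightarrow> i \<in> A \<Longrightarrow> A \<inter> B = {} \<Longrightarrow>
    (\<Sum>S\<in>Pow ((A \<union> B) - {i}). cw (card (A \<union> B)) (card S) * (if card (S \<inter> A) < k then 1 else 0)) =
    of_nat (min k (card A)) / of_nat (card A)"
  using finB
proof (induction B rule: finite_induct)
  case empty
  then show ?case using uniform_base by simp
next
  case (insert x B)
  let ?M = "(A \<union> B) - {i}"
  have xA: "x \<notin> A" using insert.prems(3) by auto
  have xM: "x \<notin> ?M" using insert.hyps(2) xA by auto
  have finM: "finite ?M" using insert.hyps(1) insert.prems(1) by simp
  have e1: "(A \<union> insert x B) - {i} = insert x ?M" using xA insert.prems(2) by auto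
  have cAB: "card (A \<union> B) = card ?M + 1"
    using insert.prems(1,2) insert.hyps(1) by (simp add: card_Diff_singleton)
     (metis Suc_pred card_gt_0_iff UnI1 empty_iff finite_UnI insert.hyps(1) insert.prems(1,2))
  have cAxB: "card (A \<union> insert x B) = card ?M + 2"
  proof -
    have "A \<union> insert x B = insert x (A \<union> B)" by auto
    moreover have "x \<notin> A \<union> B" using xA insert.hyps(2) by auto
    ultimately show ?thesis using cAB insert.hyps(1) insert.prems(1) by simp
  qed
  have F: "\<forall>S\<subseteq>?M. (if card (insert x S \<inter> A) < k then 1 else 0) = (if card (S \<inter> A) < k then 1 else (0::rat))"
    using xA by auto
  have "(\<Sum>S\<in>Pow ((A \<union> insert x B) - {i}). cw (card (A \<union> insert x B)) (card S) * (if card (S \<inter> A) < k then 1 else 0)) =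
    (\<Sum>S\<in>Pow ?M. cw (card (A \<union> B)) (card S) * (if card (S \<inter> A) < k then 1 else 0))"
    unfolding e1 cAxB cAB by (rule dummy[OF finM xM F])
  also have "\<dots> = of_nat (min k (card A)) / of_nat (card A)"
    using insert.IH insert.prems by auto
  finally show ?case .
qed


lemma shapley_cw: "shapley N v i = (\<Sum>S\<in>Pow (N - {i}). cw (card N) (card S) * (v (S \<union> {i}) - v S))"
  unfolding shapley_def cw_def by simp

lemma shapley_threshold:
  assumes fin: "finite N" and i: "i \<in> N" and A: "A \<subseteq> N"
  shows "shapley N (\<lambda>S. of_nat (min k (card (S \<inter> A)))) i =
    (if i \<in> A then of_nat (min k (card A)) / of_nat (card A) else 0)"
proof -
  have finA: "finite A" using A fin finite_subset by blast
  have marg: "(of_nat (min k (card ((S \<union> {i}) \<inter> A))) - of_nat (min k (card (S \<inter> A))) :: rat) =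
     (if i \<in> A \<and> card (S \<inter> A) < k then 1 else 0)" if S: "S \<in> Pow (N - {i})" for S
  proof -
    have iS: "i \<notin> S" using S by auto
    have fS: "finite (S \<inter> A)" using finA by simp
    show ?thesis
    proof (cases "i \<in> A")
      case True
      then have "(S \<union> {i}) \<inter> A = insert i (S \<inter> A)" by auto
      then have "card ((S \<union> {i}) \<inter> A) = Suc (card (S \<inter> A))" using iS fS by simp
      then show ?thesis using True by (simp add: min_def)
    next
      case False
      then have "(S \<union> {i}) \<inter> A = S \<inter> A" by auto
      then show ?thesis using False by simp
    qed
  qed
  have "shapley N (\<lambda>S. of_nat (min k (card (S \<inter> A)))) i =
     (\<Sum>S\<in>Pow (N - {i}). cw (card N) (card S) * (if i \<in> A \<and> card (S \<inter> A) < k then 1 else 0))"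
    unfolding shapley_cw
  proof (rule sum.cong[OF refl])
    fix S assume "S \<in> Pow (N - {i})"
    show "cw (card N) (card S) * (of_nat (min k (card ((S \<union> {i}) \<inter> A))) - of_nat (min k (card (S \<inter> A)))) =
        cw (card N) (card S) * (if i \<in> A \<and> card (S \<inter> A) < k then 1 else 0)"
      by (simp only: marg[OF \<open>S \<in> Pow (N - {i})\<close>])
  qed
  also have "\<dots> = (if i \<in> A then of_nat (min k (card A)) / of_nat (card A) else 0)"
  proof (cases "i \<in> A")
    case True
    have N: "N = A \<union> (N - A)" using A by auto
    have "(\<Sum>S\<in>Pow ((A \<union> (N - A)) - {i}). cw (card (A \<union> (N - A))) (card S) *
        (if card (S \<inter> A) < k then 1 else 0)) = of_nat (min k (card A)) / of_nat (card A)"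
      using uniform[of "N - A" A i k] fin finA True by auto
    then show ?thesis using True N by simp
  next
    case False
    then show ?thesis by simp
  qed
  finally show ?thesis .
qed

lemma shapley_sum:
  assumes T: "finite T" and i: "i \<in> N" and v: "\<forall>S\<subseteq>N. v S = (\<Sum>t\<in>T. u t S)"
  shows "shapley N v i = (\<Sum>t\<in>T. shapley N (u t) i)"
proof -
  have "shapley N v i = (\<Sum>S\<in>Pow (N - {i}). \<Sum>t\<in>T. cw (card N) (card S) * (u t (S \<union> {i}) - u t S))"
    unfolding shapley_cw
  proof (rule sum.cong[OF refl])
    fix S assume S: "S \<in> Pow (N - {i})"
    then have "S \<union> {i} \<subseteq> N" "S \<subseteq> N" using i by auto
    then show "cw (card N) (card S) * (v (S \<union> {i}) - v S) =
        (\<Sum>t\<in>T. cw (card N) (card S) * (u t (S \<union> {i}) - u t S))"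
      using v by (simp add: sum_distrib_left sum_subtractf right_diff_distrib)
  qed
  also have "\<dots> = (\<Sum>t\<in>T. shapley N (u t) i)"
    unfolding shapley_cw by (rule sum.swap)
  finally show ?thesis .
qed

lemma shapley_formula:
  assumes i: "i < length w"
  shows "shapley {0..<length w} (kmax_game k w) i = (\<Sum>j<length w. tm w k (w ! i) (w ! j))"
proof -
  let ?n = "length w"
  let ?N = "{0..<?n}"
  define W where "W = sum_list w"
  have wW: "\<forall>j<?n. w ! j \<le> W" unfolding W_def by (simp add: elem_le_sum_list)
  define A where "A t = {j\<in>?N. t \<le> w ! j}" for t
  have v: "\<forall>S\<subseteq>?N. kmax_game k w S = (\<Sum>t\<in>{1..W}. of_nat (min k (card (S \<inter> A t))))"
  proof (intro allI impI)
    fix S assume S: "S \<subseteq> ?N"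
    have fS: "finite S" using S finite_subset by blast
    have "kmax_game k w S = of_nat (\<Sum>t\<in>{1..W}. min k (card {j\<in>S. t \<le> w ! j}))"
    proof -
      have "\<forall>j\<in>S. w ! j \<le> W" using S wW by auto
      then show ?thesis by (rule kmax_layer[OF fS])
    qed
    moreover have "\<And>t. {j\<in>S. t \<le> w ! j} = S \<inter> A t" using S unfolding A_def by auto
    ultimately show "kmax_game k w S = (\<Sum>t\<in>{1..W}. of_nat (min k (card (S \<inter> A t))))" by simp
  qed
  have iN: "i \<in> ?N" using i by simp
  have "shapley ?N (kmax_game k w) i = (\<Sum>t\<in>{1..W}. shapley ?N (\<lambda>S. of_nat (min k (card (S \<inter> A t)))) i)"
    by (rule shapley_sum[OF _ iN v]) simp
  also have "\<dots> = (\<Sum>t\<in>{1..W}. if i \<in> A t then of_nat (min k (card (A t))) / of_nat (card (A t)) else 0)"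
    by (rule sum.cong[OF refl], rule shapley_threshold) (use i in \<open>auto simp: A_def\<close>)
  also have "\<dots> = (\<Sum>t\<in>{1..W}. if t \<le> w ! i then FF k (cg w t ?n) else 0)"
  proof (rule sum.cong[OF refl])
    fix t
    have "A t = {l. l < ?n \<and> t \<le> w ! l}" unfolding A_def by auto
    then show "(if i \<in> A t then of_nat (min k (card (A t))) / of_nat (card (A t)) else 0) =
        (if t \<le> w ! i then FF k (cg w t ?n) else 0)"
      using i by (simp add: cg_card FF_def A_def)
  qed
  also have "\<dots> = (\<Sum>t\<in>{1..w ! i}. FF k (cg w t ?n))"
  proof -
    have "{1..W} \<inter> {t. t \<le> w ! i} = {1..w ! i}" using wW i by auto
    then show ?thesis by (simp add: sum.If_cases)
  qed
  also have "\<dots> = (\<Sum>j<length w. tm w k (w ! i) (w ! j))" by (rule M5[OF i])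
  finally show ?thesis .
qed


lemma time_bound:
  assumes "1 \<le> (n::nat)"
  shows "13 + 8 * (4 * n - 1) + 5 + 15 + (10 * n + 23) * n + 1 \<le> 100 * n ^ 3"
proof -
  have a: "1 \<le> n ^ 3" using assms by simp
  have b: "n \<le> n ^ 3" using assms by (simp add: power3_eq_cube)
  have c: "n * n \<le> n ^ 3" using assms by (simp add: power3_eq_cube)
  have "13 + 8 * (4 * n - 1) + 5 + 15 + (10 * n + 23) * n + 1 \<le> 34 + 32 * n + 10 * (n * n) + 23 * n"
    by (simp add: algebra_simps)
  also have "\<dots> \<le> 100 * n ^ 3" using a b c by linarith
  finally show ?thesis .
qed

theorem corollary4:
  "\<exists>(p :: instr list) (C :: nat). \<forall>(k :: nat) (w :: nat list) (i :: nat).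
     i < length w \<longrightarrow>
     computes_within p k w i
       (shapley {0..<length w} (kmax_game k w) i) (C * length w ^ 3)"
proof (intro exI allI impI)
  fix k :: nat and w :: "nat list" and i :: nat
  assume i: "i < length w"
  obtain m' where r: "reach prog (0, input_mem k w i)
     (13 + 8 * (4 * length w - 1) + 5 + 15 + (10 * length w + 23) * length w + 1) (76, m')"
    and m0: "m' 0 = (\<Sum>j<length w. tm w k (w ! i) (w ! j))"
    using prog_correct[OF i, of k] by blast
  have tb: "13 + 8 * (4 * length w - 1) + 5 + 15 + (10 * length w + 23) * length w + 1 \<le> 100 * length w ^ 3"
    using i by (intro time_bound) linarith
  obtain t where t: "t \<le> 100 * length w ^ 3" and rt: "run prog t (0, input_mem k w i) = (76, m')"
    using r tb unfolding reach_def by (meson order_trans)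
  show "computes_within prog k w i (shapley {0..<length w} (kmax_game k w) i) (100 * length w ^ 3)"
    unfolding computes_within_def
    using t rt prog_halted m0 shapley_formula[OF i, of k] by auto
qed

end
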